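(* Let $p\neq 2$ be a prime and $G=Z_{p^{\lambda_1}}\times\cdots\times Z_{p^{\lambda_n}}$ with $\lambda_1\le\cdots\le\lambda_n$. Then for any $i\in\{1,\dots,n\}$, $\mathrm{Char}(G)\cong\mathrm{Char}(G\times Z_{p^{\lambda_i}})$.
   Context: $\mathrm{Char}(G)$ denotes the lattice of characteristic subgroups of $G$. *)

theory Defs
  imports "HOL-Algebra.Algebra"
begin

definition char_subgroups :: "('a, 'b) monoid_scheme \<Rightarrow> 'a set set" where
  "char_subgroups G = {H. subgroup H G \<and> (\<forall>\<phi> \<in> iso G G. \<phi> ` H = H)}"

definition lattice_iso_sets :: "'a set set \<Rightarrow> 'b set set \<Rightarrow> bool" where
  "lattice_iso_sets L M \<longleftrightarrow>
     (\<exists>f. bij_betw f L M \<and> (\<forall>A\<in>L. \<forall>B\<in>L. A \<subseteq> B \<longleftrightarrow> f A \<subseteq> f B))"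

definition cyclic_prod :: "nat \<Rightarrow> nat \<Rightarrow> (nat \<Rightarrow> nat) \<Rightarrow> (nat \<Rightarrow> int) monoid" where
  "cyclic_prod p n l = product_group {0..<n} (\<lambda>k. integer_mod_group (p ^ l k))"

end

theory Submission
  imports Defs "HOL-Computational_Algebra.Primes"
begin



lemma preimage_subgroup:
  assumes "group G" "group K" "f \<in> hom G K" "subgroup H K"
  shows "subgroup {x \<in> carrier G. f x \<in> H} G"
proof -
  interpret fh: group_hom G K f using assms by (simp add: group_hom_def group_hom_axioms_def)
  show ?thesis
    apply (rule group.subgroupI[OF assms(1)])
    using assms(4) by (auto simp: subgroup.m_closed subgroup.m_inv_closed subgroup.one_closed
         intro!: exI[of _ "\<one>\<^bsub>G\<^esub>"])
qed

lemma (in comm_group) nil_transvection_iso: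
  assumes "g \<in> hom G G" "\<And>x. x \<in> carrier G \<Longrightarrow> g (g x) = \<one>"
  shows "(\<lambda>x. x \<otimes> g x) \<in> iso G G"
proof -
  interpret gh: group_hom G G g using assms(1) is_group by (simp add: group_hom_def group_hom_axioms_def)
  have gc: "\<And>x. x \<in> carrier G \<Longrightarrow> g x \<in> carrier G" using hom_in_carrier[OF assms(1)] .
  show ?thesis
  proof (rule group_isomorphisms_imp_iso, unfold group_isomorphisms_def, intro conjI ballI)
    show "(\<lambda>x. x \<otimes> g x) \<in> hom G G"
    proof (rule homI)
      fix x y assume x: "x \<in> carrier G" and y: "y \<in> carrier G"
      show "x \<otimes> y \<otimes> g (x \<otimes> y) = x \<otimes> g x \<otimes> (y \<otimes> g y)"
        using x y gc by (simp add: m_ac)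
    qed (simp add: gc)
    show "(\<lambda>x. x \<otimes> inv g x) \<in> hom G G"
    proof (rule homI)
      fix x y assume x: "x \<in> carrier G" and y: "y \<in> carrier G"
      have "inv (g (x \<otimes> y)) = inv (g x) \<otimes> inv (g y)" using x y gc by (simp add: inv_mult)
      then show "x \<otimes> y \<otimes> inv g (x \<otimes> y) = x \<otimes> inv g x \<otimes> (y \<otimes> inv g y)"
        using x y gc by (simp add: m_ac)
    qed (simp add: gc)
    fix x assume x: "x \<in> carrier G"
    have "g (x \<otimes> g x) = g x" using x gc assms(2) by simp
    then show "x \<otimes> g x \<otimes> inv g (x \<otimes> g x) = x"
      using x gc by (simp add: m_assoc)
    have "g (x \<otimes> inv g x) = g x" using x gc assms(2) by (simp add: gh.hom_inv)
    then show "x \<otimes> inv g x \<otimes> g (x \<otimes> inv g x) = x"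
      using x gc by (simp add: m_assoc)
  qed
qed

locale oddprod =
  fixes n :: nat and m :: "nat \<Rightarrow> nat"
  assumes modd: "\<And>k. k < n \<Longrightarrow> odd (m k)"
begin

definition A where "A = product_group {0..<n} (\<lambda>k. integer_mod_group (m k))"

lemma m_pos: "k < n \<Longrightarrow> m k > 0"
  using modd by (metis odd_pos)

lemma carrierA: "x \<in> carrier A \<longleftrightarrow> x \<in> extensional {0..<n} \<and> (\<forall>k<n. 0 \<le> x k \<and> x k < int (m k))"
  using m_pos by (auto simp: A_def PiE_iff carrier_integer_mod_group)

lemma multA: "x \<otimes>\<^bsub>A\<^esub> y = (\<lambda>k\<in>{0..<n}. (x k + y k) mod int (m k))"
  by (simp add: A_def)

lemma oneA: "\<one>\<^bsub>A\<^esub> = (\<lambda>k\<in>{0..<n}. 0)"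
  by (simp add: A_def)

lemma groupA: "group A"
  by (simp add: A_def)

lemma comm_groupA: "comm_group A"
proof -
  interpret group A by (rule groupA)
  show ?thesis
    by (rule group_comm_groupI) (auto simp: multA add.commute)
qed

lemma invA: "x \<in> carrier A \<Longrightarrow> inv\<^bsub>A\<^esub> x = (\<lambda>k\<in>{0..<n}. (- x k) mod int (m k))"
  unfolding A_def
  by (subst inv_product_group) (auto simp: A_def PiE_iff)

definition inj :: "nat \<Rightarrow> int \<Rightarrow> nat \<Rightarrow> int" where
  "inj k c = (\<lambda>j\<in>{0..<n}. if j = k then c else 0)"

lemma inj_carrier: "k < n \<Longrightarrow> c \<in> carrier (integer_mod_group (m k)) \<Longrightarrow> inj k c \<in> carrier A"
  using m_pos by (auto simp: carrierA inj_def carrier_integer_mod_group split: if_splits) (metis less_irrefl m_pos)+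

lemma inj_hom: "k < n \<Longrightarrow> inj k \<in> hom (integer_mod_group (m k)) A"
  by (rule homI) (auto simp: inj_carrier[unfolded inj_def] multA inj_def fun_eq_iff)

lemma proj_hom: "k < n \<Longrightarrow> (\<lambda>x. x k) \<in> hom A (integer_mod_group (m k))"
  by (rule homI) (auto simp: carrierA multA carrier_integer_mod_group m_pos)

lemma inj_zero: "inj k 0 = \<one>\<^bsub>A\<^esub>"
  by (simp add: inj_def oneA)

lemma inj_pow: "k < n \<Longrightarrow> inj k c [^]\<^bsub>A\<^esub> (t::nat) = inj k ((int t * c) mod int (m k))"
proof (induction t)
  case 0 then show ?case by (simp add: inj_zero)
next
  case (Suc t)
  then show ?case
    by (auto simp: multA inj_def fun_eq_iff mod_add_right_eq distrib_right add.commute)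
qed

lemma generation:
  assumes M: "subgroup M A" and x: "x \<in> carrier A" and h: "\<And>k. k < n \<Longrightarrow> inj k (x k) \<in> M"
  shows "x \<in> M"
proof -
  define tr where "tr s = (\<lambda>k\<in>{0..<n}. if k < s then x k else 0)" for s
  have "s \<le> n \<Longrightarrow> tr s \<in> M" for s
  proof (induction s)
    case 0
    have "tr 0 = \<one>\<^bsub>A\<^esub>" by (simp add: tr_def oneA)
    then show ?case using M subgroup.one_closed by metis
  next
    case (Suc s)
    have "tr (Suc s) = tr s \<otimes>\<^bsub>A\<^esub> inj s (x s)"
      using x Suc.prems by (auto simp: tr_def multA inj_def fun_eq_iff carrierA)
    then show ?case using Suc M h subgroup.m_closed by fastforce
  qed
  moreover have "tr n = x" using x by (auto simp: tr_def carrierA fun_eq_iff extensional_def)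
  ultimately show ?thesis by auto
qed

end

lemma mul_mod_add:
  fixes a b c M :: int
  shows "(c * ((a + b) mod M)) mod M = ((c*a) mod M + (c*b) mod M) mod M"
proof -
  have "(c * ((a + b) mod M)) mod M = (c * (a + b)) mod M" by (rule mod_mult_right_eq)
  also have "... = (c*a + c*b) mod M" by (simp add: distrib_left)
  also have "... = ((c*a) mod M + (c*b) mod M) mod M" by (rule mod_add_eq[symmetric])
  finally show ?thesis .
qed

lemma half_arith:
  fixes M :: nat and x h :: int
  assumes h: "2 * h = int M + 1" and "0 \<le> x" "x < int M"
  shows "(2 * ((h * x) mod int M)) mod int M = x"
    and "(h * ((2 * x) mod int M)) mod int M = x"
proof -
  have "(2 * ((h * x) mod int M)) mod int M = ((2 * h) * x) mod int M"
    by (simp add: mod_mult_right_eq mult.assoc)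
  also have "... = (int M * x + x) mod int M" by (simp add: h distrib_right)
  also have "... = x" using assms by simp
  finally show "(2 * ((h * x) mod int M)) mod int M = x" .
  have "(h * ((2 * x) mod int M)) mod int M = ((2 * h) * x) mod int M"
    by (simp add: mod_mult_right_eq mult.assoc mult.left_commute)
  also have "... = (int M * x + x) mod int M" by (simp add: h distrib_right)
  also have "... = x" using assms by simp
  finally show "(h * ((2 * x) mod int M)) mod int M = x" .
qed

context oddprod begin

definition dbl where "dbl S x = (\<lambda>k\<in>{0..<n}. if k \<in> S then (2 * x k) mod int (m k) else x k)"
definition hh where "hh k = int ((m k + 1) div 2)"
lemma hh2: "k < n \<Longrightarrow> 2 * hh k = int (m k) + 1"
  unfolding hh_def using modd[of k]
  by (metis dvd_mult_div_cancel odd_even_add odd_one of_nat_1 of_nat_add of_nat_mult of_nat_numeral)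
definition hlf where "hlf S x = (\<lambda>k\<in>{0..<n}. if k \<in> S then (hh k * x k) mod int (m k) else x k)"

lemma m_pos_int: "k < n \<Longrightarrow> 0 < int (m k)"
  using m_pos by simp

lemma dbl_iso: "dbl S \<in> iso A A"
proof (rule group_isomorphisms_imp_iso, unfold group_isomorphisms_def, intro conjI ballI)
  show "dbl S \<in> hom A A"
  proof (rule homI)
    fix x assume "x \<in> carrier A" then show "dbl S x \<in> carrier A"
      by (auto simp: dbl_def carrierA m_pos_int)
  next
    fix x y assume "x \<in> carrier A" "y \<in> carrier A"
    show "dbl S (x \<otimes>\<^bsub>A\<^esub> y) = dbl S x \<otimes>\<^bsub>A\<^esub> dbl S y"
      unfolding multA dbl_def
      by (rule ext) (simp add: mul_mod_add)
  qed
  show "hlf S \<in> hom A A"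
  proof (rule homI)
    fix x assume "x \<in> carrier A" then show "hlf S x \<in> carrier A"
      by (auto simp: hlf_def carrierA m_pos_int)
  next
    fix x y assume "x \<in> carrier A" "y \<in> carrier A"
    show "hlf S (x \<otimes>\<^bsub>A\<^esub> y) = hlf S x \<otimes>\<^bsub>A\<^esub> hlf S y"
      unfolding multA hlf_def
      by (rule ext) (simp add: mul_mod_add)
  qed
  fix x assume x: "x \<in> carrier A"
  show "hlf S (dbl S x) = x"
  proof (rule ext)
    fix j show "hlf S (dbl S x) j = x j"
      using x half_arith(2)[OF hh2[of j], of "x j"]
      by (cases "j < n") (auto simp: hlf_def dbl_def carrierA extensional_def)
  qed
  show "dbl S (hlf S x) = x"
  proof (rule ext)
    fix j show "dbl S (hlf S x) j = x j"
      using x half_arith(1)[OF hh2[of j], of "x j"]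
      by (cases "j < n") (auto simp: hlf_def dbl_def carrierA extensional_def)
  qed
qed

end


lemma arith_dbl_sub:
  fixes x M :: int assumes "0 \<le> x" "x < M" shows "(2 * x mod M - x) mod M = x"
proof -
  have "(2 * x mod M - x) mod M = (2 * x - x) mod M" by (rule mod_diff_left_eq)
  then show ?thesis using assms by simp
qed

lemma cyc_hom:
  assumes h: "h \<in> hom (integer_mod_group a) (integer_mod_group b)" and a: "a > 0"
    and c: "c \<in> carrier (integer_mod_group a)"
  shows "h c = (c * h 1) mod int b"
proof (cases "a = 1")
  case True
  then have "c = 0" using c by (simp add: carrier_integer_mod_group)
  moreover have "h 0 = 0"
    using group_hom.hom_one[of "integer_mod_group a" "integer_mod_group b" h] h
    by (simp add: group_hom_def group_hom_axioms_def)
  ultimately show ?thesis by simp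
next
  case False
  have c0: "0 \<le> c" "c < int a" using c a by (auto simp: carrier_integer_mod_group)
  have "c = pow (integer_mod_group a) 1 (nat c)"
    using c0 False by (simp add: pow_integer_mod_group)
  then have "h c = pow (integer_mod_group b) (h 1) (nat c)"
    using hom_nat_pow[OF h, of 1 "nat c"] False by simp
  also have "... = (c * h 1) mod int b"
    using c0 hom_in_carrier[OF h, of 1] False by (simp add: pow_integer_mod_group)
  finally show ?thesis .
qed

context oddprod begin

lemma char_closed: "H \<in> char_subgroups A \<Longrightarrow> \<phi> \<in> iso A A \<Longrightarrow> x \<in> H \<Longrightarrow> \<phi> x \<in> H"
  unfolding char_subgroups_def by blast

lemma char_coord:
  assumes H: "H \<in> char_subgroups A" and x: "x \<in> H" and k: "k < n"
  shows "inj k (x k) \<in> H"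
proof -
  have sg: "subgroup H A" using H by (simp add: char_subgroups_def)
  have xc: "x \<in> carrier A" using subgroup.subset[OF sg] x by blast
  have "dbl {k} x \<otimes>\<^bsub>A\<^esub> inv\<^bsub>A\<^esub> x \<in> H"
    using char_closed[OF H dbl_iso x] sg x by (simp add: subgroup.m_closed subgroup.m_inv_closed)
  moreover have "dbl {k} x \<otimes>\<^bsub>A\<^esub> inv\<^bsub>A\<^esub> x = inj k (x k)"
  proof -
    have ar: "(2 * x k mod int (m k) - x k) mod int (m k) = x k" using xc k
      by (intro arith_dbl_sub) (auto simp: carrierA)
    show ?thesis unfolding invA[OF xc] multA dbl_def inj_def
    proof (rule ext)
      fix j show "(\<lambda>ka\<in>{0..<n}. ((\<lambda>ka\<in>{0..<n}. if ka \<in> {k} then 2 * x ka mod int (m ka) else x ka) ka +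
                         (\<lambda>k\<in>{0..<n}. - x k mod int (m k)) ka) mod int (m ka)) j =
         (\<lambda>j\<in>{0..<n}. if j = k then x k else 0) j"
        using ar by (cases "j < n"; cases "j = k") (simp_all add: mod_add_right_eq)
    qed
  qed
  ultimately show ?thesis by simp
qed

end


lemma subgroup_nat_pow_closed:
  assumes "subgroup H G" "x \<in> H" shows "x [^]\<^bsub>G\<^esub> (t::nat) \<in> H"
  using assms by (induction t) (auto simp: subgroup.one_closed subgroup.m_closed)

context oddprod begin

lemma full_inv:
  assumes H: "H \<in> char_subgroups A" and e: "e \<in> hom A A" and x: "x \<in> H"
  shows "e x \<in> H"
proof -
  interpret A: comm_group A by (rule comm_groupA)
  have sg: "subgroup H A" using H by (simp add: char_subgroups_def)
  have HA: "\<And>y. y \<in> H \<Longrightarrow> y \<in> carrier A" using subgroup.subset[OF sg] by blast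
  have key: "inj j (e (inj k c) j) \<in> H"
    if j: "j < n" and k: "k < n" and cH: "inj k c \<in> H" and c: "c \<in> carrier (integer_mod_group (m k))" for j k c
  proof -
    define h where "h = (\<lambda>c. e (inj k c) j)"
    have "(\<lambda>x. x j) \<circ> e \<circ> inj k \<in> hom (integer_mod_group (m k)) (integer_mod_group (m j))"
      using hom_compose[OF hom_compose[OF inj_hom[OF k] e] proj_hom[OF j]] by (simp add: comp_assoc)
    then have hh: "h \<in> hom (integer_mod_group (m k)) (integer_mod_group (m j))"
      by (simp add: h_def o_def)
    have h0: "h 0 = 0"
      using group_hom.hom_one[of "integer_mod_group (m k)" "integer_mod_group (m j)" h] hh
      by (simp add: group_hom_def group_hom_axioms_def)
    show ?thesis
    proof (cases "j = k")
      case True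
      show ?thesis
      proof (cases "m k = 1")
        case True
        then have "c = 0" using c by (simp add: carrier_integer_mod_group)
        then have "inj j (e (inj k c) j) = inj j (h 0)" by (simp add: h_def)
        then show ?thesis using h0 sg by (simp add: inj_zero subgroup.one_closed)
      next
        case False
        have h1: "0 \<le> h 1" using hom_in_carrier[OF hh, of 1] False m_pos[OF j] m_pos[OF k] by (simp add: carrier_integer_mod_group)
        have "h c = (c * h 1) mod int (m k)" using cyc_hom[OF hh m_pos[OF k] c] True by simp
        moreover have "inj k c [^]\<^bsub>A\<^esub> (nat (h 1)) = inj k ((int (nat (h 1)) * c) mod int (m k))"
          by (rule inj_pow[OF k])
        ultimately have "inj j (h c) = inj k c [^]\<^bsub>A\<^esub> (nat (h 1))"
          using True h1 by (simp add: mult.commute)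
        then show ?thesis using subgroup_nat_pow_closed[OF sg cH] by (simp add: h_def)
      qed
    next
      case False
      define g where "g = inj j \<circ> h \<circ> (\<lambda>x. x k)"
      have gh: "g \<in> hom A A" unfolding g_def
        using hom_compose[OF hom_compose[OF proj_hom[OF k] hh] inj_hom[OF j]] by (simp add: comp_assoc)
      have gg: "g (g y) = \<one>\<^bsub>A\<^esub>" if "y \<in> carrier A" for y
        using False k by (simp add: g_def inj_def h0 oneA)
      have T: "(\<lambda>y. y \<otimes>\<^bsub>A\<^esub> g y) \<in> iso A A" by (rule A.nil_transvection_iso[OF gh gg])
      have ic: "inj k c \<in> carrier A" using HA cH by blast
      have "inj k c \<otimes>\<^bsub>A\<^esub> g (inj k c) \<in> H" using char_closed[OF H T cH] by simp
      then have "inv\<^bsub>A\<^esub> (inj k c) \<otimes>\<^bsub>A\<^esub> (inj k c \<otimes>\<^bsub>A\<^esub> g (inj k c)) \<in> H"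
        using cH sg by (simp add: subgroup.m_closed subgroup.m_inv_closed)
      moreover have "inv\<^bsub>A\<^esub> (inj k c) \<otimes>\<^bsub>A\<^esub> (inj k c \<otimes>\<^bsub>A\<^esub> g (inj k c)) = g (inj k c)"
        using ic hom_in_carrier[OF gh ic] by (simp add: A.m_assoc[symmetric])
      moreover have "g (inj k c) = inj j (h c)" using k by (simp add: g_def inj_def)
      ultimately show ?thesis by (simp add: h_def)
    qed
  qed
  have xc: "x \<in> carrier A" using HA x by blast
  have exc: "e x \<in> carrier A" using hom_in_carrier[OF e xc] .
  show ?thesis
  proof (rule generation[OF sg exc])
    fix j assume j: "j < n"
    have "inj j \<circ> (\<lambda>x. x j) \<circ> e \<in> hom A A"
      using hom_compose[OF hom_compose[OF e proj_hom[OF j]] inj_hom[OF j]] by (simp add: comp_assoc)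
    then have "subgroup {y \<in> carrier A. (inj j \<circ> (\<lambda>x. x j) \<circ> e) y \<in> H} A"
      by (rule preimage_subgroup[OF groupA groupA _ sg])
    then have "x \<in> {y \<in> carrier A. (inj j \<circ> (\<lambda>x. x j) \<circ> e) y \<in> H}"
    proof (rule generation[OF _ xc])
      fix k assume k: "k < n"
      have cH: "inj k (x k) \<in> H" by (rule char_coord[OF H x k])
      have c: "x k \<in> carrier (integer_mod_group (m k))"
        using xc k m_pos[OF k] by (simp add: carrierA carrier_integer_mod_group)
      show "inj k (x k) \<in> {y \<in> carrier A. (inj j \<circ> (\<lambda>x. x j) \<circ> e) y \<in> H}"
        using key[OF j k cH c] HA[OF cH] by simp
    qed
    then show "inj j (e x j) \<in> H" by simp
  qed
qed

end


context oddprod begin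

lemma dbl_inv: "x \<in> carrier A \<Longrightarrow> dbl S x \<otimes>\<^bsub>A\<^esub> inv\<^bsub>A\<^esub> x = (\<lambda>k\<in>{0..<n}. if k \<in> S then x k else 0)"
proof (rule ext)
  fix j assume xc: "x \<in> carrier A"
  show "(dbl S x \<otimes>\<^bsub>A\<^esub> inv\<^bsub>A\<^esub> x) j = (\<lambda>k\<in>{0..<n}. if k \<in> S then x k else 0) j"
  proof (cases "j < n")
    case True
    have ar: "(2 * x j mod int (m j) - x j) mod int (m j) = x j" using xc True
      by (intro arith_dbl_sub) (auto simp: carrierA)
    show ?thesis unfolding invA[OF xc] multA dbl_def
      using ar True by (cases "j \<in> S") (simp_all add: mod_add_right_eq)
  qed (simp add: multA)
qed

definition F :: "nat \<Rightarrow> (nat \<Rightarrow> int) set \<Rightarrow> ((nat \<Rightarrow> int) \<times> int) set" where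
  "F i H = H \<times> {y \<in> carrier (integer_mod_group (m i)). inj i y \<in> H}"

definition G :: "((nat \<Rightarrow> int) \<times> int) set \<Rightarrow> (nat \<Rightarrow> int) set" where
  "G K = {x \<in> carrier A. (x, 0) \<in> K}"

lemma groupB: "group (A \<times>\<times> integer_mod_group (m i))"
  by (rule DirProd_group[OF groupA group_integer_mod_group])

lemma inA_hom: "(\<lambda>x. (x, 0)) \<in> hom A (A \<times>\<times> integer_mod_group (m i))"
proof (rule homI)
  fix x assume "x \<in> carrier A" then show "(x, 0) \<in> carrier (A \<times>\<times> integer_mod_group (m i))" by simp
next
  fix x y assume "x \<in> carrier A" "y \<in> carrier A"
  then show "(x \<otimes>\<^bsub>A\<^esub> y, 0) = (x, 0) \<otimes>\<^bsub>A \<times>\<times> integer_mod_group (m i)\<^esub> (y, 0)" by simp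
qed

lemma inC_hom: "(\<lambda>y. (\<one>\<^bsub>A\<^esub>, y)) \<in> hom (integer_mod_group (m i)) (A \<times>\<times> integer_mod_group (m i))"
proof (rule homI)
  fix x assume "x \<in> carrier (integer_mod_group (m i))"
  then show "(\<one>\<^bsub>A\<^esub>, x) \<in> carrier (A \<times>\<times> integer_mod_group (m i))"
    using group.is_monoid[OF groupA] by (simp add: monoid.one_closed)
next
  fix x y assume "x \<in> carrier (integer_mod_group (m i))" "y \<in> carrier (integer_mod_group (m i))"
  then show "(\<one>\<^bsub>A\<^esub>, x \<otimes>\<^bsub>integer_mod_group (m i)\<^esub> y) = (\<one>\<^bsub>A\<^esub>, x) \<otimes>\<^bsub>A \<times>\<times> integer_mod_group (m i)\<^esub> (\<one>\<^bsub>A\<^esub>, y)"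
    using group.is_monoid[OF groupA] by (simp add: monoid.one_closed monoid.l_one)
qed

lemma fst_hom: "fst \<in> hom (A \<times>\<times> integer_mod_group (m i)) A"
  by (rule homI) (auto simp: mult_DirProd')

lemma snd_hom: "snd \<in> hom (A \<times>\<times> integer_mod_group (m i)) (integer_mod_group (m i))"
  by (rule homI) (auto simp: mult_DirProd')

lemma prod_iso:
  assumes "\<phi> \<in> iso A A"
  shows "(\<lambda>p. (\<phi> (fst p), snd p)) \<in> iso (A \<times>\<times> integer_mod_group (m i)) (A \<times>\<times> integer_mod_group (m i))"
proof -
  obtain \<psi> where gi: "group_isomorphisms A A \<phi> \<psi>"
    using group.iso_iff_group_isomorphisms[OF groupA] assms by blast
  then have ph: "\<phi> \<in> hom A A" and ps: "\<psi> \<in> hom A A"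
    and i1: "\<And>x. x \<in> carrier A \<Longrightarrow> \<psi> (\<phi> x) = x" and i2: "\<And>x. x \<in> carrier A \<Longrightarrow> \<phi> (\<psi> x) = x"
    by (auto simp: group_isomorphisms_def)
  show ?thesis
  proof (rule group_isomorphisms_imp_iso, unfold group_isomorphisms_def, intro conjI ballI)
    show "(\<lambda>p. (\<phi> (fst p), snd p)) \<in> hom (A \<times>\<times> integer_mod_group (m i)) (A \<times>\<times> integer_mod_group (m i))"
      by (rule homI) (auto simp: mult_DirProd' hom_in_carrier[OF ph] hom_mult[OF ph])
    show "(\<lambda>p. (\<psi> (fst p), snd p)) \<in> hom (A \<times>\<times> integer_mod_group (m i)) (A \<times>\<times> integer_mod_group (m i))"
      by (rule homI) (auto simp: mult_DirProd' hom_in_carrier[OF ps] hom_mult[OF ps])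
    fix p assume "p \<in> carrier (A \<times>\<times> integer_mod_group (m i))"
    then show "(\<psi> (fst (\<phi> (fst p), snd p)), snd (\<phi> (fst p), snd p)) = p"
      "(\<phi> (fst (\<psi> (fst p), snd p)), snd (\<psi> (fst p), snd p)) = p"
      by (auto simp: i1 i2)
  qed
qed

definition swp :: "nat \<Rightarrow> (nat \<Rightarrow> int) \<times> int \<Rightarrow> (nat \<Rightarrow> int) \<times> int" where
  "swp i p = ((\<lambda>k\<in>{0..<n}. if k = i then snd p else fst p k), fst p i)"

lemma swp_iso:
  assumes i: "i < n"
  shows "swp i \<in> iso (A \<times>\<times> integer_mod_group (m i)) (A \<times>\<times> integer_mod_group (m i))"
proof -
  have hm: "swp i \<in> hom (A \<times>\<times> integer_mod_group (m i)) (A \<times>\<times> integer_mod_group (m i))"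
  proof (rule homI)
    fix p assume "p \<in> carrier (A \<times>\<times> integer_mod_group (m i))"
    then show "swp i p \<in> carrier (A \<times>\<times> integer_mod_group (m i))"
      using i m_pos[OF i] by (auto simp: swp_def carrierA carrier_integer_mod_group mem_Times_iff)
  next
    fix p q assume "p \<in> carrier (A \<times>\<times> integer_mod_group (m i))" "q \<in> carrier (A \<times>\<times> integer_mod_group (m i))"
    then show "swp i (p \<otimes>\<^bsub>A \<times>\<times> integer_mod_group (m i)\<^esub> q) = swp i p \<otimes>\<^bsub>A \<times>\<times> integer_mod_group (m i)\<^esub> swp i q"
      using i by (simp add: swp_def mult_DirProd' multA fun_eq_iff)
  qed
  have inv: "swp i (swp i p) = p" if "p \<in> carrier (A \<times>\<times> integer_mod_group (m i))" for p
    using i that by (cases p) (auto simp: swp_def carrierA fun_eq_iff extensional_def)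
  show ?thesis
    by (rule group_isomorphisms_imp_iso[where g="swp i"]) (simp add: group_isomorphisms_def hm inv)
qed

end


context oddprod begin

lemma GF: "subgroup H A \<Longrightarrow> G (F i H) = H"
  using subgroup.subset[of H A] subgroup.one_closed[of H A]
  by (auto simp: G_def F_def inj_zero)

lemma G_mono: "K \<subseteq> K' \<Longrightarrow> G K \<subseteq> G K'"
  by (auto simp: G_def)

lemma F_mono: "H \<subseteq> H' \<Longrightarrow> F i H \<subseteq> F i H'"
  by (auto simp: F_def)

lemma F_char:
  assumes i: "i < n" and H: "H \<in> char_subgroups A"
  shows "F i H \<in> char_subgroups (A \<times>\<times> integer_mod_group (m i))"
proof -
  let ?B = "A \<times>\<times> integer_mod_group (m i)"
  let ?Z = "integer_mod_group (m i)"
  interpret B: group ?B by (rule groupB)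
  have sg: "subgroup H A" using H by (simp add: char_subgroups_def)
  have HA: "\<And>y. y \<in> H \<Longrightarrow> y \<in> carrier A" using subgroup.subset[OF sg] by blast
  have sgF: "subgroup (F i H) ?B" unfolding F_def
    by (rule DirProd_subgroups[OF groupA sg group_integer_mod_group
          preimage_subgroup[OF group_integer_mod_group groupA inj_hom[OF i] sg]])
  have inc: "\<Phi> ` F i H \<subseteq> F i H" if Phi: "\<Phi> \<in> iso ?B ?B" for \<Phi>
  proof
    fix z assume "z \<in> \<Phi> ` F i H"
    then obtain x y where z: "z = \<Phi> (x, y)" and x: "x \<in> H" and y: "y \<in> carrier ?Z" and yH: "inj i y \<in> H"
      by (auto simp: F_def)
    have Ph: "\<Phi> \<in> hom ?B ?B" using Phi by (simp add: iso_def)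
    have xc: "x \<in> carrier A" using HA x by blast
    have iyc: "inj i y \<in> carrier A" using HA yH by blast
    have pr: "(\<lambda>x. x i) (inj i y) = y" using i by (simp add: inj_def)
    have "(x, y) = (x, 0) \<otimes>\<^bsub>?B\<^esub> (\<one>\<^bsub>A\<^esub>, y)"
      using xc y m_pos[OF i] by (simp add: carrier_integer_mod_group group.is_monoid[OF groupA] monoid.r_one)
    then have dec: "\<Phi> (x, y) = \<Phi> (x, 0) \<otimes>\<^bsub>?B\<^esub> \<Phi> (\<one>\<^bsub>A\<^esub>, y)"
      using hom_mult[OF Ph, of "(x,0)" "(\<one>\<^bsub>A\<^esub>, y)"] xc y by (simp add: group.is_monoid[OF groupA] monoid.one_closed)
    have e1: "fst \<circ> \<Phi> \<circ> (\<lambda>x. (x, 0)) \<in> hom A A"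
      using hom_compose[OF hom_compose[OF inA_hom Ph] fst_hom] by (simp add: comp_assoc)
    have e2: "fst \<circ> \<Phi> \<circ> (\<lambda>y. (\<one>\<^bsub>A\<^esub>, y)) \<circ> (\<lambda>x. x i) \<in> hom A A"
      using hom_compose[OF hom_compose[OF hom_compose[OF proj_hom[OF i] inC_hom] Ph] fst_hom] by (simp add: comp_assoc)
    have e3: "inj i \<circ> snd \<circ> \<Phi> \<circ> (\<lambda>x. (x, 0)) \<in> hom A A"
      using hom_compose[OF hom_compose[OF hom_compose[OF inA_hom Ph] snd_hom] inj_hom[OF i]] by (simp add: comp_assoc)
    have e4: "inj i \<circ> snd \<circ> \<Phi> \<circ> (\<lambda>y. (\<one>\<^bsub>A\<^esub>, y)) \<circ> (\<lambda>x. x i) \<in> hom A A"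
      using hom_compose[OF hom_compose[OF hom_compose[OF hom_compose[OF proj_hom[OF i] inC_hom] Ph] snd_hom] inj_hom[OF i]]
      by (simp add: comp_assoc)
    have h1: "fst (\<Phi> (x, 0)) \<in> H" using full_inv[OF H e1 x] by simp
    have h2: "fst (\<Phi> (\<one>\<^bsub>A\<^esub>, y)) \<in> H" using full_inv[OF H e2 yH] pr by simp
    have h3: "inj i (snd (\<Phi> (x, 0))) \<in> H" using full_inv[OF H e3 x] by simp
    have h4: "inj i (snd (\<Phi> (\<one>\<^bsub>A\<^esub>, y))) \<in> H" using full_inv[OF H e4 yH] pr by simp
    have c1: "\<Phi> (x, 0) \<in> carrier ?B" using hom_in_carrier[OF Ph] xc by simp
    have c2: "\<Phi> (\<one>\<^bsub>A\<^esub>, y) \<in> carrier ?B"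
      using hom_in_carrier[OF Ph] y by (simp add: group.is_monoid[OF groupA] monoid.one_closed)
    have s1: "snd (\<Phi> (x, 0)) \<in> carrier ?Z" using c1 by (simp add: mem_Times_iff)
    have s2: "snd (\<Phi> (\<one>\<^bsub>A\<^esub>, y)) \<in> carrier ?Z" using c2 by (simp add: mem_Times_iff)
    have fz: "fst z = fst (\<Phi> (x, 0)) \<otimes>\<^bsub>A\<^esub> fst (\<Phi> (\<one>\<^bsub>A\<^esub>, y))"
      using z dec by (simp add: mult_DirProd')
    have sz: "snd z = snd (\<Phi> (x, 0)) \<otimes>\<^bsub>?Z\<^esub> snd (\<Phi> (\<one>\<^bsub>A\<^esub>, y))"
      using z dec by (simp add: mult_DirProd')
    have "inj i (snd z) = inj i (snd (\<Phi> (x, 0))) \<otimes>\<^bsub>A\<^esub> inj i (snd (\<Phi> (\<one>\<^bsub>A\<^esub>, y)))"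
      using sz hom_mult[OF inj_hom[OF i] s1 s2] by simp
    then have "inj i (snd z) \<in> H" using h3 h4 subgroup.m_closed[OF sg] by simp
    moreover have "fst z \<in> H" using fz h1 h2 subgroup.m_closed[OF sg] by simp
    moreover have "snd z \<in> carrier ?Z" using sz s1 s2 group.is_monoid[OF group_integer_mod_group] monoid.m_closed by metis
    ultimately show "z \<in> F i H" by (cases z) (simp add: F_def)
  qed
  have "\<Phi> ` F i H = F i H" if Phi: "\<Phi> \<in> iso ?B ?B" for \<Phi>
  proof
    show "\<Phi> ` F i H \<subseteq> F i H" by (rule inc[OF Phi])
    let ?P = "inv_into (carrier ?B) \<Phi>"
    have P: "?P \<in> iso ?B ?B" by (rule B.iso_set_sym[OF Phi])
    have bij: "bij_betw \<Phi> (carrier ?B) (carrier ?B)" using Phi by (simp add: iso_def)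
    show "F i H \<subseteq> \<Phi> ` F i H"
    proof
      fix z assume zF: "z \<in> F i H"
      have zc: "z \<in> carrier ?B" using subgroup.subset[OF sgF] zF by blast
      have "?P z \<in> F i H" using inc[OF P] zF by blast
      moreover have "\<Phi> (?P z) = z"
        using bij zc by (simp add: bij_betw_inv_into_right)
      ultimately show "z \<in> \<Phi> ` F i H" by (metis imageI)
    qed
  qed
  then show ?thesis using sgF by (simp add: char_subgroups_def)
qed

lemma G_char:
  assumes i: "i < n" and K: "K \<in> char_subgroups (A \<times>\<times> integer_mod_group (m i))"
  shows "G K \<in> char_subgroups A"
proof -
  let ?B = "A \<times>\<times> integer_mod_group (m i)"
  have sgK: "subgroup K ?B" using K by (simp add: char_subgroups_def)
  have KB: "\<And>z. z \<in> K \<Longrightarrow> z \<in> carrier ?B" using subgroup.subset[OF sgK] by blast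
  have sg: "subgroup (G K) A" unfolding G_def
    by (rule preimage_subgroup[OF groupA groupB inA_hom sgK])
  have "\<phi> ` G K = G K" if phi: "\<phi> \<in> iso A A" for \<phi>
  proof -
    have Ps: "(\<lambda>p. (\<phi> (fst p), snd p)) \<in> iso ?B ?B" by (rule prod_iso[OF phi])
    have KK: "(\<lambda>p. (\<phi> (fst p), snd p)) ` K = K" using K Ps by (simp add: char_subgroups_def)
    have ph: "\<phi> \<in> hom A A" using phi by (simp add: iso_def)
    show ?thesis
    proof
      show "\<phi> ` G K \<subseteq> G K"
      proof
        fix z assume "z \<in> \<phi> ` G K"
        then obtain x where z: "z = \<phi> x" and x: "x \<in> carrier A" "(x, 0) \<in> K" by (auto simp: G_def)
        have "(\<phi> x, 0) \<in> K" using KK x(2) by (metis (no_types, lifting) fst_conv snd_conv imageI)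
        then show "z \<in> G K" using z hom_in_carrier[OF ph x(1)] by (simp add: G_def)
      qed
      show "G K \<subseteq> \<phi> ` G K"
      proof
        fix x assume "x \<in> G K"
        then have "(x, 0) \<in> (\<lambda>p. (\<phi> (fst p), snd p)) ` K" using KK by (simp add: G_def)
        then obtain q where q: "q \<in> K" "(x, 0) = (\<phi> (fst q), snd q)" by blast
        have "fst q \<in> carrier A" using KB[OF q(1)] by (simp add: mem_Times_iff)
        moreover have "(fst q, 0) \<in> K" using q by (metis prod.collapse prod.inject)
        ultimately have "fst q \<in> G K" by (simp add: G_def)
        then show "x \<in> \<phi> ` G K" using q(2) by auto
      qed
    qed
  qed
  then show ?thesis using sg by (simp add: char_subgroups_def)
qed

lemma FG:
  assumes i: "i < n" and K: "K \<in> char_subgroups (A \<times>\<times> integer_mod_group (m i))"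
  shows "F i (G K) = K"
proof -
  let ?B = "A \<times>\<times> integer_mod_group (m i)"
  let ?Z = "integer_mod_group (m i)"
  interpret B: group ?B by (rule groupB)
  have sgK: "subgroup K ?B" using K by (simp add: char_subgroups_def)
  have KB: "\<And>z. z \<in> K \<Longrightarrow> z \<in> carrier ?B" using subgroup.subset[OF sgK] by blast
  have clos: "\<And>\<Phi> z. \<Phi> \<in> iso ?B ?B \<Longrightarrow> z \<in> K \<Longrightarrow> \<Phi> z \<in> K"
    using K unfolding char_subgroups_def by blast
  have oneA_c: "\<one>\<^bsub>A\<^esub> \<in> carrier A" by (simp add: group.is_monoid[OF groupA] monoid.one_closed)
  show ?thesis
  proof
    show "F i (G K) \<subseteq> K"
    proof
      fix z assume "z \<in> F i (G K)"
      then obtain x y where z: "z = (x, y)" and x: "x \<in> carrier A" "(x, 0) \<in> K"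
        and y: "y \<in> carrier ?Z" and iy: "inj i y \<in> carrier A" "(inj i y, 0) \<in> K"
        by (auto simp: F_def G_def)
      have "swp i (inj i y, 0) = (\<one>\<^bsub>A\<^esub>, y)"
        using i by (simp add: swp_def inj_def oneA fun_eq_iff)
      then have "(\<one>\<^bsub>A\<^esub>, y) \<in> K" using clos[OF swp_iso[OF i] iy(2)] by simp
      then have "(x, 0) \<otimes>\<^bsub>?B\<^esub> (\<one>\<^bsub>A\<^esub>, y) \<in> K" using x(2) subgroup.m_closed[OF sgK] by blast
      moreover have "(x, 0) \<otimes>\<^bsub>?B\<^esub> (\<one>\<^bsub>A\<^esub>, y) = (x, y)"
        using x(1) y m_pos[OF i] by (simp add: carrier_integer_mod_group group.is_monoid[OF groupA] monoid.r_one)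
      ultimately show "z \<in> K" using z by simp
    qed
    show "K \<subseteq> F i (G K)"
    proof
      fix z assume zK: "z \<in> K"
      obtain x y where z: "z = (x, y)" by (cases z)
      have x: "x \<in> carrier A" and y: "y \<in> carrier ?Z" using KB[OF zK] z by auto
      have "(dbl UNIV x, y) \<in> K" using clos[OF prod_iso[OF dbl_iso] zK] z by simp
      then have "(dbl UNIV x, y) \<otimes>\<^bsub>?B\<^esub> inv\<^bsub>?B\<^esub> (x, y) \<in> K"
        using zK z subgroup.m_closed[OF sgK] subgroup.m_inv_closed[OF sgK] by blast
      moreover have "dbl UNIV x \<otimes>\<^bsub>A\<^esub> inv\<^bsub>A\<^esub> x = x"
        using dbl_inv[OF x, of UNIV] x by (simp add: carrierA fun_eq_iff extensional_def)
      moreover have "y \<otimes>\<^bsub>?Z\<^esub> inv\<^bsub>?Z\<^esub> y = 0"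
        using group.r_inv[OF group_integer_mod_group y] by simp
      ultimately have x0: "(x, 0) \<in> K"
        using x y by (simp add: inv_DirProd[OF groupA group_integer_mod_group x y])
      have "inv\<^bsub>?B\<^esub> (x, 0) \<otimes>\<^bsub>?B\<^esub> (x, y) \<in> K"
        using zK z x0 subgroup.m_closed[OF sgK] subgroup.m_inv_closed[OF sgK] by blast
      moreover have "inv\<^bsub>?B\<^esub> (x, 0) \<otimes>\<^bsub>?B\<^esub> (x, y) = (\<one>\<^bsub>A\<^esub>, y)"
      proof -
        have "inv\<^bsub>?B\<^esub> (x, 0) \<otimes>\<^bsub>?B\<^esub> (x, y) = inv\<^bsub>?B\<^esub> (x, 0) \<otimes>\<^bsub>?B\<^esub> ((x, 0) \<otimes>\<^bsub>?B\<^esub> (\<one>\<^bsub>A\<^esub>, y))"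
          using x y m_pos[OF i] by (simp add: carrier_integer_mod_group group.is_monoid[OF groupA] monoid.r_one)
        also have "... = (inv\<^bsub>?B\<^esub> (x, 0) \<otimes>\<^bsub>?B\<^esub> (x, 0)) \<otimes>\<^bsub>?B\<^esub> (\<one>\<^bsub>A\<^esub>, y)"
          using x y oneA_c B.inv_closed[of "(x, 0)"] by (intro B.m_assoc[symmetric]) auto
        also have "... = (\<one>\<^bsub>A\<^esub>, y)"
          using x y oneA_c B.l_inv[of "(x, 0)"] B.l_one[of "(\<one>\<^bsub>A\<^esub>, y)"] by (simp del: inv_DirProd one_DirProd)
           
        finally show ?thesis .
      qed
      ultimately have "(\<one>\<^bsub>A\<^esub>, y) \<in> K" by simp
      then have "swp i (\<one>\<^bsub>A\<^esub>, y) \<in> K" using clos[OF swp_iso[OF i]] by blast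
      moreover have "swp i (\<one>\<^bsub>A\<^esub>, y) = (inj i y, 0)"
        using i by (simp add: swp_def inj_def oneA fun_eq_iff)
      ultimately have iy: "(inj i y, 0) \<in> K" by simp
      have iyc: "inj i y \<in> carrier A" by (rule inj_carrier[OF i y])
      show "z \<in> F i (G K)" using z x0 x y iy iyc by (simp add: F_def G_def)
    qed
  qed
qed

lemma lattice_main:
  assumes i: "i < n"
  shows "lattice_iso_sets (char_subgroups A) (char_subgroups (A \<times>\<times> integer_mod_group (m i)))"
  unfolding lattice_iso_sets_def
proof (intro exI conjI ballI)
  let ?CA = "char_subgroups A" and ?CB = "char_subgroups (A \<times>\<times> integer_mod_group (m i))"
  have sgc: "\<And>H. H \<in> ?CA \<Longrightarrow> subgroup H A" by (simp add: char_subgroups_def)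
  show "bij_betw (F i) ?CA ?CB"
  proof (rule bij_betwI')
    fix H H' assume "H \<in> ?CA" "H' \<in> ?CA"
    then show "(F i H = F i H') = (H = H')" using GF sgc by metis
  next
    fix H assume "H \<in> ?CA" then show "F i H \<in> ?CB" by (rule F_char[OF i])
  next
    fix K assume "K \<in> ?CB" then show "\<exists>H \<in> ?CA. K = F i H"
      using G_char[OF i] FG[OF i] by metis
  qed
  fix H H' assume H: "H \<in> ?CA" and H': "H' \<in> ?CA"
  show "H \<subseteq> H' \<longleftrightarrow> F i H \<subseteq> F i H'"
  proof
    assume "H \<subseteq> H'" then show "F i H \<subseteq> F i H'" by (rule F_mono)
  next
    assume "F i H \<subseteq> F i H'"
    then have "G (F i H) \<subseteq> G (F i H')" by (rule G_mono)
    then show "H \<subseteq> H'" using GF sgc H H' by metis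
  qed
qed

end


theorem mainTheorem8:
  fixes p n :: nat and l :: "nat \<Rightarrow> nat" and i :: nat
  assumes "Factorial_Ring.prime p" and "p \<noteq> 2"
    and "\<And>k. k < n \<Longrightarrow> 1 \<le> l k"
    and "\<And>j k. j \<le> k \<Longrightarrow> k < n \<Longrightarrow> l j \<le> l k"
    and "i < n"
  shows "lattice_iso_sets (char_subgroups (cyclic_prod p n l))
           (char_subgroups (cyclic_prod p n l \<times>\<times> integer_mod_group (p ^ l i)))"
proof -
  have "p > 2" using assms(1,2) prime_ge_2_nat[of p] by linarith
  then have op: "odd p" using assms(1) prime_odd_nat by blast
  interpret oddprod n "\<lambda>k. p ^ l k"
    by unfold_locales (simp add: op)
  have "cyclic_prod p n l = A" by (simp add: cyclic_prod_def A_def)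
  then show ?thesis using lattice_main[OF assms(5)] by simp
qed

end
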